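(* The Fatou set of the word semigroup satisfies $F(\mathcal{G})\supset \operatorname{int}(\mathcal{R})$.
   Context: $\Gamma_z=\langle \pm\begin{pmatrix}1&1\\0&1\end{pmatrix},\pm\begin{pmatrix}1&0\\ z&1\end{pmatrix}\rangle\subset PSL(2,\mathbb{C})$. The Riley slice is $\mathcal{R}=\{z\in\mathbb{C}: \Gamma_z\text{ is discrete and }\Omega(\Gamma_z)/\Gamma_z \text{ is a four times punctured sphere}\}$, $\Omega(\Gamma)$ the ordinary set. For $x,y\in PSL(2,\mathbb{C})$, $\gamma(x,y)=\operatorname{tr}[x,y]-2$. A good word is a reduced word $w=a^{m_1}ba^{m_2}b\cdots ba^{m_n}$ in $\langle a,b\mid b^2=1\rangle$ with $n\ge3$ and $m_i\ne0$ for $2\le i\le n-1$; its word polynomial $p_w\in\mathbb{Z}[z]$ is the unique polynomial with $\gamma(f,w(f,\phi))=p_w(\gamma(f,\phi))$ for every parabolic $f$ and order-two elliptic $\phi$ in $PSL(2,\mathbb{C})$ ($w(f,\phi)$: substitute $a=f,b=\phi$). $\mathcal{G}=\{p_w\}$; its Fatou set $F(\mathcal{G})$ is the set of points having a neighbourhood on which $\mathcal{G}$ is a normal family. *)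

theory Defs
  imports "HOL-Analysis.Analysis" "HOL-Computational_Algebra.Polynomial"
begin

type_synonym mat2 = "complex^2^2"

definition mk2 :: "complex \<Rightarrow> complex \<Rightarrow> complex \<Rightarrow> complex \<Rightarrow> mat2" where
  "mk2 a b c d = vector [vector [a, b], vector [c, d]]"

definition in_SL2 :: "mat2 \<Rightarrow> bool" where
  "in_SL2 M \<longleftrightarrow> det M = 1"

text \<open>Inverse of a determinant-one matrix (adjugate).\<close>
definition inv2 :: "mat2 \<Rightarrow> mat2" where
  "inv2 M = mk2 (M$2$2) (- (M$1$2)) (- (M$2$1)) (M$1$1)"

definition mpow :: "mat2 \<Rightarrow> int \<Rightarrow> mat2" where
  "mpow M m = (if 0 \<le> m then ((\<lambda>X. X ** M) ^^ nat m) (mat 1)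
               else ((\<lambda>X. X ** inv2 M) ^^ nat (- m)) (mat 1))"

definition commutator :: "mat2 \<Rightarrow> mat2 \<Rightarrow> mat2" where
  "commutator x y = x ** y ** inv2 x ** inv2 y"

text \<open>gamma(x,y) = tr[x,y] - 2 (well defined on PSL(2,C), independent of sign choices).\<close>
definition gamma :: "mat2 \<Rightarrow> mat2 \<Rightarrow> complex" where
  "gamma x y = trace (commutator x y) - 2"

text \<open>Parabolic elements of PSL(2,C), via an SL(2,C) representative.\<close>
definition parabolic :: "mat2 \<Rightarrow> bool" where
  "parabolic f \<longleftrightarrow> in_SL2 f \<and> (trace f)\<^sup>2 = 4 \<and> f \<noteq> mat 1 \<and> f \<noteq> - mat 1"

text \<open>Elements of order two in PSL(2,C), via an SL(2,C) representative.\<close>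
definition order_two :: "mat2 \<Rightarrow> bool" where
  "order_two \<phi> \<longleftrightarrow> in_SL2 \<phi> \<and> \<phi> \<noteq> mat 1 \<and> \<phi> \<noteq> - mat 1 \<and>
       (\<phi> ** \<phi> = mat 1 \<or> \<phi> ** \<phi> = - mat 1)"

text \<open>A word a^{m_1} b a^{m_2} b ... b a^{m_n} is encoded by the list [m_1,...,m_n].\<close>
definition good_word :: "int list \<Rightarrow> bool" where
  "good_word ms \<longleftrightarrow> length ms \<ge> 3 \<and> (\<forall>i. 1 \<le> i \<and> i < length ms - 1 \<longrightarrow> ms ! i \<noteq> 0)"

fun eval_word :: "int list \<Rightarrow> mat2 \<Rightarrow> mat2 \<Rightarrow> mat2" where
  "eval_word [] f \<phi> = mat 1"
| "eval_word [m] f \<phi> = mpow f m"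
| "eval_word (m # m' # ms) f \<phi> = mpow f m ** \<phi> ** eval_word (m' # ms) f \<phi>"

definition word_poly :: "int list \<Rightarrow> int poly" where
  "word_poly ms = (THE p. \<forall>f \<phi>. parabolic f \<longrightarrow> order_two \<phi> \<longrightarrow>
       gamma f (eval_word ms f \<phi>) = poly (map_poly of_int p) (gamma f \<phi>))"

definition word_semigroup :: "(complex \<Rightarrow> complex) set" where
  "word_semigroup = {(\<lambda>x. poly (map_poly of_int (word_poly w)) x) | w. good_word w}"

definition normal_family_on :: "(complex \<Rightarrow> complex) set \<Rightarrow> complex set \<Rightarrow> bool" where
  "normal_family_on F U \<longleftrightarrow>
     (\<forall>f :: nat \<Rightarrow> complex \<Rightarrow> complex. (\<forall>n. f n \<in> F) \<longrightarrow>
        (\<exists>r. strict_mono r \<and>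
           ((\<exists>g. \<forall>K. compact K \<and> K \<subseteq> U \<longrightarrow> uniform_limit K (\<lambda>n. f (r n)) g sequentially) \<or>
            (\<forall>K. compact K \<and> K \<subseteq> U \<longrightarrow>
               (\<forall>B. eventually (\<lambda>n. \<forall>x\<in>K. B \<le> norm (f (r n) x)) sequentially)))))"

definition fatou_set :: "(complex \<Rightarrow> complex) set \<Rightarrow> complex set" where
  "fatou_set F = {z. \<exists>U. open U \<and> z \<in> U \<and> normal_family_on F U}"

text \<open>The Riemann sphere: None is the point at infinity.\<close>
definition open_hat :: "complex option set \<Rightarrow> bool" where
  "open_hat U \<longleftrightarrow> open {z. Some z \<in> U} \<and>
     (None \<in> U \<longrightarrow> (\<exists>R. \<forall>z. R < norm z \<longrightarrow> Some z \<in> U))"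

lemma istopology_open_hat: "istopology open_hat"
  unfolding istopology_def
proof (intro conjI allI impI)
  fix S T assume S: "open_hat S" and T: "open_hat T"
  have "{z. Some z \<in> S \<inter> T} = {z. Some z \<in> S} \<inter> {z. Some z \<in> T}" by auto
  moreover have "None \<in> S \<inter> T \<Longrightarrow> \<exists>R. \<forall>z. R < norm z \<longrightarrow> Some z \<in> S \<inter> T"
  proof -
    assume "None \<in> S \<inter> T"
    then obtain R1 R2 where "\<forall>z. R1 < norm z \<longrightarrow> Some z \<in> S" "\<forall>z. R2 < norm z \<longrightarrow> Some z \<in> T"
      using S T unfolding open_hat_def by blast
    then show ?thesis by (intro exI[of _ "max R1 R2"]) auto
  qed
  ultimately show "open_hat (S \<inter> T)" using S T unfolding open_hat_def by auto
next
  fix K assume K: "\<forall>S\<in>K. open_hat S"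
  have "{z. Some z \<in> \<Union>K} = (\<Union>S\<in>K. {z. Some z \<in> S})" by auto
  moreover have "open (\<Union>S\<in>K. {z. Some z \<in> S})" using K unfolding open_hat_def by auto
  moreover have "None \<in> \<Union>K \<Longrightarrow> \<exists>R. \<forall>z. R < norm z \<longrightarrow> Some z \<in> \<Union>K"
    using K unfolding open_hat_def by blast
  ultimately show "open_hat (\<Union>K)" unfolding open_hat_def by auto
qed

definition riemann_sphere :: "complex option topology" where
  "riemann_sphere = topology open_hat"

definition moebius :: "mat2 \<Rightarrow> complex option \<Rightarrow> complex option" where
  "moebius M w = (let a = M$1$1; b = M$1$2; c = M$2$1; d = M$2$2 in
     (case w of
        None \<Rightarrow> (if c = 0 then None else Some (a / c))
      | Some z \<Rightarrow> (if c * z + d = 0 then None else Some ((a * z + b) / (c * z + d)))))"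

inductive_set gen_group :: "mat2 set \<Rightarrow> mat2 set" for S where
  gen_one: "mat 1 \<in> gen_group S"
| gen_base: "s \<in> S \<Longrightarrow> s \<in> gen_group S"
| gen_mult: "g \<in> gen_group S \<Longrightarrow> h \<in> gen_group S \<Longrightarrow> g ** h \<in> gen_group S"
| gen_inv: "g \<in> gen_group S \<Longrightarrow> inv2 g \<in> gen_group S"

text \<open>The full preimage in SL(2,C) of Gamma_z = < +-[[1,1],[0,1]], +-[[1,0],[z,1]] >.\<close>
definition Gamma :: "complex \<Rightarrow> mat2 set" where
  "Gamma z = gen_group {mk2 1 1 0 1, mk2 1 0 z 1, - mat 1}"

text \<open>Discreteness (the preimage in SL(2,C) is a discrete subset of the matrix space).\<close>
definition discrete_group :: "mat2 set \<Rightarrow> bool" where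
  "discrete_group G \<longleftrightarrow> (\<forall>g\<in>G. \<exists>e>0. \<forall>h\<in>G. dist h g < e \<longrightarrow> h = g)"

definition ordinary_set :: "mat2 set \<Rightarrow> complex option set" where
  "ordinary_set G = {x. \<exists>U. openin riemann_sphere U \<and> x \<in> U \<and>
        finite {g\<in>G. moebius g ` U \<inter> U \<noteq> {}}}"

text \<open>Omega(G)/G is homeomorphic to P: there is a quotient map from Omega onto P whose fibres
  are exactly the G-orbits.\<close>
definition quotient_homeomorphic :: "mat2 set \<Rightarrow> 'b topology \<Rightarrow> bool" where
  "quotient_homeomorphic G P \<longleftrightarrow>
     (\<exists>q. quotient_map (subtopology riemann_sphere (ordinary_set G)) P q \<and>
          (\<forall>x\<in>ordinary_set G. \<forall>y\<in>ordinary_set G.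
              q x = q y \<longleftrightarrow> (\<exists>g\<in>G. moebius g x = y)))"

definition four_punctured_sphere_quotient :: "mat2 set \<Rightarrow> bool" where
  "four_punctured_sphere_quotient G \<longleftrightarrow>
     (\<exists>S. card S = 4 \<and> quotient_homeomorphic G (subtopology riemann_sphere (UNIV - S)))"

definition riley_slice :: "complex set" where
  "riley_slice = {z. discrete_group (Gamma z) \<and> four_punctured_sphere_quotient (Gamma z)}"

end

theory Submission
  imports Defs "HOL-Complex_Analysis.Complex_Analysis"
begin

no_notation fps_nth (infixl \<open>$\<close> 75)


lemma mat2_eqI: "(A::mat2) = B" if "A$1$1 = B$1$1" "A$1$2 = B$1$2" "A$2$1 = B$2$1" "A$2$2 = B$2$2"
  using that by (simp add: vec_eq_iff forall_2)

lemma mk2_nth[simp]: "mk2 a b c d $1$1 = a" "mk2 a b c d $1$2 = b" "mk2 a b c d $2$1 = c" "mk2 a b c d $2$2 = d"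
  by (simp_all add: mk2_def)

lemma mat2_eta: "(M::mat2) = mk2 (M$1$1) (M$1$2) (M$2$1) (M$2$2)"
  by (rule mat2_eqI) simp_all

lemma mk2_eq_iff: "mk2 a b c d = mk2 a' b' c' d' \<longleftrightarrow> a = a' \<and> b = b' \<and> c = c' \<and> d = d'"
  by (auto dest: arg_cong[where f="\<lambda>M. M$1$1"] arg_cong[where f="\<lambda>M. M$1$2"] arg_cong[where f="\<lambda>M. M$2$1"] arg_cong[where f="\<lambda>M. M$2$2"])

lemma sum2: "(\<Sum>i\<in>(UNIV::2 set). f i) = f 1 + f 2"
  by (simp add: UNIV_2)

lemma mk2_mult: "mk2 a b c d ** mk2 a' b' c' d' = mk2 (a*a'+b*c') (a*b'+b*d') (c*a'+d*c') (c*b'+d*d')"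
  by (rule mat2_eqI) (simp_all add: matrix_matrix_mult_def sum2)

lemma mk2_one: "mat 1 = mk2 1 0 0 1"
  by (rule mat2_eqI) (simp_all add: mat_def)

lemma mk2_neg: "- mk2 a b c d = mk2 (-a) (-b) (-c) (-d)"
  by (rule mat2_eqI) simp_all

lemma mk2_det: "det (mk2 a b c d) = a*d - b*c"
  by (simp add: det_2)

lemma mk2_trace: "trace (mk2 a b c d) = a + d"
  by (simp add: trace_def sum2)

lemma mk2_inv2: "inv2 (mk2 a b c d) = mk2 d (-b) (-c) a"
  by (simp add: inv2_def)

lemmas mk2_simps = mk2_mult mk2_one mk2_neg mk2_det mk2_trace mk2_inv2 mk2_eq_iff

lemma mk2_dist: "dist (mk2 a b c d) (mk2 a' b' c' d') \<le> cmod (a-a') + cmod (b-b') + cmod (c-c') + cmod (d-d')"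
proof -
  have r: "norm v \<le> norm (v$1) + norm (v$2)" for v :: "'a::real_normed_vector^2"
    unfolding norm_vec_def by (rule order_trans[OF L2_set_le_sum]) (simp_all add: sum2)
  have "dist (mk2 a b c d) (mk2 a' b' c' d') = norm (mk2 a b c d - mk2 a' b' c' d')"
    by (simp add: dist_norm)
  also have "\<dots> \<le> norm ((mk2 a b c d - mk2 a' b' c' d')$1) + norm ((mk2 a b c d - mk2 a' b' c' d')$2)"
    by (rule r)
  also have "\<dots> \<le> (cmod (a-a') + cmod (b-b')) + (cmod (c-c') + cmod (d-d'))"
    apply (rule add_mono)
    using r[of "(mk2 a b c d - mk2 a' b' c' d')$1"] r[of "(mk2 a b c d - mk2 a' b' c' d')$2"]
    by simp_all
  finally show ?thesis by simp
qed

lemma mat2_cases: obtains a b c d where "(M::mat2) = mk2 a b c d"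
  using mat2_eta by blast

lemma inv2_mult: "inv2 (A ** B) = inv2 B ** inv2 A" for A B :: mat2
  by (cases A rule: mat2_cases, cases B rule: mat2_cases) (simp add: mk2_simps algebra_simps)

lemma inv2_inv2[simp]: "inv2 (inv2 A) = A" for A :: mat2
  by (subst (1 2) mat2_eta[of A]) (simp add: mk2_simps)

lemma inv2_one[simp]: "inv2 (mat 1) = mat 1"
  by (simp add: mk2_simps)

lemma inv2_neg: "inv2 (- A) = - inv2 A" for A :: mat2
  by (subst (1 2) mat2_eta[of A]) (simp add: mk2_simps)

lemma mult_inv2_right: "det A = 1 \<Longrightarrow> A ** inv2 A = mat 1" for A :: mat2
  by (subst (asm) mat2_eta[of A], subst (1 2) mat2_eta[of A]) (simp add: mk2_simps algebra_simps)

lemma mult_inv2_left: "det A = 1 \<Longrightarrow> inv2 A ** A = mat 1" for A :: mat2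
  by (subst (asm) mat2_eta[of A], subst (1 2) mat2_eta[of A]) (simp add: mk2_simps algebra_simps)

lemma det_inv2: "det (inv2 A) = det A" for A :: mat2
  by (subst (1 2) mat2_eta[of A]) (simp add: mk2_simps algebra_simps)

lemma det_mult2: "det (A ** B) = det A * det (B::mat2)" for A B :: mat2
  by (simp add: det_mul)

lemma det_neg2: "det (- A) = det (A::mat2)" for A :: mat2
  by (subst (1 2) mat2_eta[of A]) (simp add: mk2_simps algebra_simps)

lemma mult_neg_left2: "(- A) ** B = - (A ** (B::mat2))" for A B :: mat2
  by (subst (1 2) mat2_eta[of A], subst (1 2) mat2_eta[of B]) (simp add: mk2_simps algebra_simps)

lemma mult_neg_right2: "A ** (- B) = - (A ** (B::mat2))" for A B :: mat2
  by (subst (1 2) mat2_eta[of A], subst (1 2) mat2_eta[of B]) (simp add: mk2_simps algebra_simps)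

lemma trace_conj: "det P = 1 \<Longrightarrow> trace (P ** M ** inv2 P) = trace M" for P M :: mat2
proof -
  assume "det P = 1"
  then have "P$1$1 * P$2$2 - P$1$2 * P$2$1 = 1" by (subst (asm) mat2_eta[of P]) (simp add: mk2_simps)
  then show ?thesis
    apply (subst (1 2) mat2_eta[of P], subst (1 2) mat2_eta[of M])
    apply (simp add: mk2_simps)
    by algebra
qed


definition ev :: "int poly \<Rightarrow> complex \<Rightarrow> complex" where
  "ev p x = poly (map_poly of_int p) x"

lemma mpoi_add: "map_poly (of_int::int\<Rightarrow>complex) (p + q) = map_poly of_int p + map_poly of_int q"
  by (intro poly_eqI) (simp add: coeff_map_poly)
lemma mpoi_neg: "map_poly (of_int::int\<Rightarrow>complex) (- p) = - map_poly of_int p"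
  by (intro poly_eqI) (simp add: coeff_map_poly)
lemma mpoi_diff: "map_poly (of_int::int\<Rightarrow>complex) (p - q) = map_poly of_int p - map_poly of_int q"
  by (intro poly_eqI) (simp add: coeff_map_poly)
lemma mpoi_mult: "map_poly (of_int::int\<Rightarrow>complex) (p * q) = map_poly of_int p * map_poly of_int q"
proof (induction p rule: pCons_induct)
  case 0 then show ?case by simp
next
  case (pCons a p)
  show ?case
    by (simp add: mpoi_add map_poly_smult map_poly_pCons pCons.IH algebra_simps)
qed

lemma ev_add[simp]: "ev (p + q) x = ev p x + ev q x" by (simp add: ev_def mpoi_add)
lemma ev_diff[simp]: "ev (p - q) x = ev p x - ev q x" by (simp add: ev_def mpoi_diff)
lemma ev_neg[simp]: "ev (- p) x = - ev p x" by (simp add: ev_def mpoi_neg)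
lemma ev_mult[simp]: "ev (p * q) x = ev p x * ev q x" by (simp add: ev_def mpoi_mult)
lemma ev_const[simp]: "ev [:a:] x = of_int a" by (simp add: ev_def map_poly_pCons)
lemma ev_X[simp]: "ev [:0,1:] x = x" by (simp add: ev_def map_poly_pCons)
lemma ev_1[simp]: "ev 1 x = 1" by (simp add: ev_def)
lemma ev_0[simp]: "ev 0 x = 0" by (simp add: ev_def)
lemma ev_pow[simp]: "ev (p ^ n) x = ev p x ^ n" by (induction n) simp_all

lemma mpoi_inj: "map_poly (of_int::int\<Rightarrow>complex) p = map_poly of_int q \<Longrightarrow> p = q"
  by (metis (no_types, lifting) coeff_map_poly of_int_0 of_int_eq_iff poly_eqI)

lemma powX_nat: "((\<lambda>Y. Y ** mk2 1 s 0 1) ^^ n) (mat 1) = mk2 1 (of_nat n * s) 0 1"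
  by (induction n) (simp_all add: mk2_simps algebra_simps)

lemma mpow_X: "mpow (mk2 1 1 0 1) m = mk2 1 (of_int m) 0 1"
proof (cases "0 \<le> m")
  case True
  then show ?thesis by (simp add: mpow_def powX_nat)
next
  case False
  then have "mpow (mk2 1 1 0 1) m = ((\<lambda>Y. Y ** mk2 1 (-1) 0 1) ^^ nat (-m)) (mat 1)"
    by (simp add: mpow_def mk2_inv2)
  also have "\<dots> = mk2 1 (of_int m) 0 1" using False by (simp add: powX_nat)
  finally show ?thesis .
qed

definition cj :: "mat2 \<Rightarrow> mat2 \<Rightarrow> mat2" where "cj P A = P ** A ** inv2 P"

lemma cj_mult: "det P = 1 \<Longrightarrow> cj P A ** cj P B = cj P (A ** B)"
proof -
  assume d: "det P = 1"
  have "cj P A ** cj P B = P ** A ** (inv2 P ** P) ** B ** inv2 P"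
    by (simp add: cj_def matrix_mul_assoc)
  also have "\<dots> = cj P (A ** B)" using d by (simp add: mult_inv2_left cj_def matrix_mul_assoc)
  finally show ?thesis .
qed

lemma cj_one: "det P = 1 \<Longrightarrow> cj P (mat 1) = mat 1"
  by (simp add: cj_def mult_inv2_right)

lemma cj_inv2: "inv2 (cj P A) = cj P (inv2 A)"
  by (simp add: cj_def inv2_mult matrix_mul_assoc)

lemma pow_cj: "det P = 1 \<Longrightarrow> ((\<lambda>Y. Y ** cj P A) ^^ n) (mat 1) = cj P (((\<lambda>Y. Y ** A) ^^ n) (mat 1))"
  by (induction n) (simp_all add: cj_one cj_mult)

lemma mpow_cj: "det P = 1 \<Longrightarrow> mpow (cj P A) m = cj P (mpow A m)"
  by (simp add: mpow_def pow_cj cj_inv2)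

lemma eval_cj: "det P = 1 \<Longrightarrow> eval_word ms (cj P f) (cj P \<phi>) = cj P (eval_word ms f \<phi>)"
  by (induction ms f \<phi> rule: eval_word.induct) (simp_all add: cj_one mpow_cj cj_mult)

lemma gamma_cj: "det P = 1 \<Longrightarrow> gamma (cj P f) (cj P g) = gamma f g"
  by (simp add: gamma_def commutator_def cj_inv2 cj_mult) (simp add: cj_def trace_conj)

lemma gamma_neg1: "gamma (- f) g = gamma f g"
  by (simp add: gamma_def commutator_def inv2_neg mult_neg_left2 mult_neg_right2)

lemma gamma_neg2: "gamma f (- g) = gamma f g"
  by (simp add: gamma_def commutator_def inv2_neg mult_neg_left2 mult_neg_right2)

lemma gamma_pm: "W' = W \<or> W' = - W \<Longrightarrow> gamma f W' = gamma f W"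
  using gamma_neg2 by auto

lemma pow_neg: "((\<lambda>Y. Y ** (- A)) ^^ n) (mat 1) = ((\<lambda>Y. Y ** A) ^^ n) (mat 1) \<or>
   ((\<lambda>Y. Y ** (- A)) ^^ n) (mat 1) = - ((\<lambda>Y. Y ** A) ^^ n) (mat 1)" for A :: mat2
proof (induction n)
  case 0 then show ?case by simp
next
  case (Suc n)
  from Suc.IH show ?case by (elim disjE) (simp_all add: mult_neg_left2 mult_neg_right2)
qed

lemma mpow_neg: "mpow (- f) m = mpow f m \<or> mpow (- f) m = - mpow f m"
  by (simp add: mpow_def inv2_neg pow_neg)

lemma eval_neg: "eval_word ms (- f) \<phi> = eval_word ms f \<phi> \<or> eval_word ms (- f) \<phi> = - eval_word ms f \<phi>"
proof (induction ms f \<phi> rule: eval_word.induct)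
  case (3 m m' ms f \<phi>)
  then show ?case using mpow_neg[of f m]
    by (auto simp: mult_neg_left2 mult_neg_right2)
qed (simp_all add: mpow_neg)

lemma det_pow: "det A = 1 \<Longrightarrow> det (((\<lambda>Y. Y ** A) ^^ n) (mat 1)) = (1::complex)" for A :: mat2
  by (induction n) (simp_all add: det_mult2 det_I)

lemma det_mpow: "det A = 1 \<Longrightarrow> det (mpow A m) = 1"
  by (simp add: mpow_def det_pow det_inv2)

lemma det_eval: "det f = 1 \<Longrightarrow> det \<phi> = 1 \<Longrightarrow> det (eval_word ms f \<phi>) = 1"
  by (induction ms f \<phi> rule: eval_word.induct) (simp_all add: det_mpow det_mult2 det_I)

lemma gamma_X: "det g = 1 \<Longrightarrow> gamma (mk2 1 1 0 1) g = (g$2$1)^2"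
proof (cases g rule: mat2_cases)
  case (1 a b c d)
  assume "det g = 1"
  then have "a*d - b*c = 1" using 1 by (simp add: mk2_simps)
  moreover have "(a + c) * d - (- a - c + (b + d)) * c + ((d - c) * a - c * b) - 2 = 2*(a*d - b*c) + c^2 - 2"
    by (simp add: algebra_simps power2_eq_square)
  ultimately show ?thesis using 1
    by (simp add: gamma_def commutator_def mk2_simps)
qed


definition xp :: "int poly" where "xp = [:0,1:]"

lemma ev_smult[simp]: "ev (smult a p) x = of_int a * ev p x"
  by (simp add: ev_def map_poly_smult)

lemma ev_pCons[simp]: "ev (pCons a p) x = of_int a + x * ev p x"
  by (simp add: ev_def map_poly_pCons)

lemma mat_mult_21: "((A::mat2) ** B)$2$1 = A$2$1 * B$1$1 + A$2$2 * B$2$1"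
  by (simp add: matrix_matrix_mult_def sum2)


fun wq :: "int list \<Rightarrow> bool \<times> int poly \<times> int poly \<times> int poly \<times> int poly" where
  "wq [] = (False, 1, 0, 0, 1)"
| "wq [m] = (False, 1, [:m:], 0, 1)"
| "wq (m # m' # ms) = (case wq (m' # ms) of (od, A, B, C, D) \<Rightarrow>
    if od then (False, [:m:] * xp * A - C, [:m:] * B - D, A, B)
    else (True, [:m:] * A - C, [:m:] * xp * B - D, A, B))"

definition wpoly :: "int list \<Rightarrow> int poly" where
  "wpoly ms = (case wq ms of (od, A, B, C, D) \<Rightarrow> if od then xp * C^2 else xp^2 * C^2)"

definition phic :: "complex \<Rightarrow> mat2" where "phic c = mk2 0 (-1/c) c 0"

lemma eval_phic:
  assumes c: "c \<noteq> 0"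
  shows "ms \<noteq> [] \<Longrightarrow> eval_word ms (mk2 1 1 0 1) (phic c) = (case wq ms of (od,A,B,C,D) \<Rightarrow>
     if od then mk2 (c * ev A (c^2)) (ev B (c^2) / c) (c * ev C (c^2)) (c * ev D (c^2))
     else mk2 (ev A (c^2)) (ev B (c^2)) (c^2 * ev C (c^2)) (ev D (c^2)))"
proof (induction ms rule: wq.induct)
  case 1 then show ?case by simp
next
  case (2 m) then show ?case by (simp add: mpow_X)
next
  case (3 m m' ms)
  obtain od A B C D where w: "wq (m' # ms) = (od, A, B, C, D)" by (cases "wq (m' # ms)") auto
  have IH: "eval_word (m' # ms) (mk2 1 1 0 1) (phic c) = (if od then mk2 (c * ev A (c^2)) (ev B (c^2) / c) (c * ev C (c^2)) (c * ev D (c^2))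
     else mk2 (ev A (c^2)) (ev B (c^2)) (c^2 * ev C (c^2)) (ev D (c^2)))"
    using 3 w by simp
  show ?case
  proof (cases od)
    case True
    then show ?thesis using IH w c
      by (simp add: mpow_X phic_def mk2_simps xp_def) (simp add: field_simps power2_eq_square)
  next
    case False
    then show ?thesis using IH w c
      by (simp add: mpow_X phic_def mk2_simps xp_def) (simp add: field_simps power2_eq_square)
  qed
qed

lemma LL_phic:
  assumes "c \<noteq> 0" "ms \<noteq> []"
  shows "(eval_word ms (mk2 1 1 0 1) (phic c) $2$1)^2 = ev (wpoly ms) (c^2)"
proof -
  obtain od A B C D where w: "wq ms = (od, A, B, C, D)" by (cases "wq ms") auto
  show ?thesis using eval_phic[OF assms] w
    by (cases od) (simp_all add: wpoly_def xp_def power_mult_distrib power2_eq_square)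
qed

lemma wpoly_0: "ev (wpoly ms) 0 = 0"
proof -
  obtain od A B C D where w: "wq ms = (od, A, B, C, D)" by (cases "wq ms") auto
  then show ?thesis by (cases od) (simp_all add: wpoly_def xp_def)
qed

lemma det_phic: "c \<noteq> 0 \<Longrightarrow> det (phic c) = 1"
  by (simp add: phic_def mk2_simps)

lemma LL_upper: "\<phi>$2$1 = 0 \<Longrightarrow> eval_word ms (mk2 1 1 0 1) \<phi> $2$1 = 0"
proof (induction ms "mk2 1 1 0 1" \<phi> rule: eval_word.induct)
  case (1 \<phi>) then show ?case by (simp add: mk2_simps)
next
  case (2 m \<phi>) then show ?case by (simp add: mpow_X)
next
  case (3 m m' ms \<phi>)
  then show ?case
    by (simp add: mat_mult_21 mpow_X)
qed

lemma normal_identity: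
  assumes d: "det \<phi> = 1" and t: "trace \<phi> = 0" and ms: "ms \<noteq> []"
  shows "gamma (mk2 1 1 0 1) (eval_word ms (mk2 1 1 0 1) \<phi>) = ev (wpoly ms) (gamma (mk2 1 1 0 1) \<phi>)"
proof -
  obtain a b c e where phi: "\<phi> = mk2 a b c e" by (rule mat2_cases)
  have "a + e = 0" using t phi by (simp add: mk2_simps)
  then have e: "e = -a" by (simp add: eq_neg_iff_add_eq_0 add.commute)
  have de: "-a*a - b*c = 1" using d phi e by (simp add: mk2_simps)
  have dW: "det (eval_word ms (mk2 1 1 0 1) \<phi>) = 1"
    using d by (intro det_eval) (simp_all add: mk2_simps)
  have gphi: "gamma (mk2 1 1 0 1) \<phi> = c^2" using gamma_X[OF d] phi by simp
  show ?thesis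
  proof (cases "c = 0")
    case True
    then have "eval_word ms (mk2 1 1 0 1) \<phi> $2$1 = 0" using phi by (intro LL_upper) simp
    then show ?thesis using gamma_X[OF dW] gphi True by (simp add: wpoly_0)
  next
    case False
    define T where "T = mk2 1 (a/c) 0 1"
    have dT: "det T = 1" by (simp add: T_def mk2_simps)
    have TX: "cj T (mk2 1 1 0 1) = mk2 1 1 0 1" by (simp add: T_def cj_def mk2_simps)
    have "b * c = -1 - a*a" using de by algebra
    then have b: "b = (-1 - a*a)/c" using False by (simp add: field_simps)
    have Tphi: "cj T (phic c) = \<phi>" using False
      by (simp add: T_def cj_def mk2_simps phic_def phi e b) (simp add: field_simps)
    have "eval_word ms (mk2 1 1 0 1) \<phi> = cj T (eval_word ms (mk2 1 1 0 1) (phic c))"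
      using eval_cj[OF dT, of ms "mk2 1 1 0 1" "phic c"] TX Tphi by simp
    then have "gamma (mk2 1 1 0 1) (eval_word ms (mk2 1 1 0 1) \<phi>) =
        gamma (mk2 1 1 0 1) (eval_word ms (mk2 1 1 0 1) (phic c))"
      using gamma_cj[OF dT, of "mk2 1 1 0 1"] TX by metis
    also have "\<dots> = (eval_word ms (mk2 1 1 0 1) (phic c) $2$1)^2"
      by (rule gamma_X, rule det_eval) (simp_all add: mk2_simps det_phic False)
    also have "\<dots> = ev (wpoly ms) (c^2)" using LL_phic[OF False ms] .
    finally show ?thesis using gphi by simp
  qed
qed


abbreviation XX :: mat2 where "XX \<equiv> mk2 1 1 0 1"

lemma cjX: "cj (mk2 p q r t) XX = mk2 (p*t - p*r - q*r) (p*p) (- r*r) (p*r + p*t - q*r)"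
  by (simp add: cj_def mk2_simps algebra_simps)

lemma parabolic_core:
  assumes det: "a*d - b*c = 1" and tr: "a + d = 2" and ne: "mk2 a b c d \<noteq> mat 1"
  shows "\<exists>P. det P = 1 \<and> mk2 a b c d = cj P XX"
proof -
  have dd: "d = 2 - a" using tr by (simp add: algebra_simps)
  have key: "(1 - a)^2 = - b*c" using det unfolding dd by algebra
  show ?thesis
  proof (cases "b = 0")
    case False
    define p where "p = csqrt b"
    have p2: "p*p = b" by (metis p_def power2_csqrt power2_eq_square)
    have p0: "p \<noteq> 0" using False p2 by auto
    define r where "r = (1 - a)/p"
    have rr: "r*r = -c"
    proof -
      have "r*r*(p*p) = (1-a)^2" using p0 by (simp add: r_def field_simps power2_eq_square)
      then have "r*r*b = -b*c" using key p2 by simp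
      then have "b * (r*r + c) = 0" by algebra
      then show ?thesis using False by algebra
    qed
    have pr: "p*r = 1 - a" using p0 by (simp add: r_def)
    have d2: "d = 1 + p*r" using dd pr by algebra
    show ?thesis
    proof (intro exI conjI)
      show "det (mk2 p 0 r (1/p)) = 1" using p0 by (simp add: mk2_simps)
      show "mk2 a b c d = cj (mk2 p 0 r (1/p)) XX"
        unfolding cjX using p0 p2 rr pr d2 by (simp add: mk2_simps algebra_simps)
    qed
  next
    case True
    then have "(1 - a)^2 = 0" using key by simp
    then have a1: "a = 1" by simp
    then have d1: "d = 1" using dd by simp
    have c0: "c \<noteq> 0" using ne True a1 d1 by (auto simp: mk2_simps)
    define r where "r = csqrt (-c)"
    have rr: "r*r = -c" by (metis r_def power2_csqrt power2_eq_square)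
    have r0: "r \<noteq> 0" using rr c0 by auto
    show ?thesis
    proof (intro exI conjI)
      show "det (mk2 0 (-1/r) r 0) = 1" using r0 by (simp add: mk2_simps)
      show "mk2 a b c d = cj (mk2 0 (-1/r) r 0) XX"
        unfolding cjX using r0 rr a1 d1 True by (simp add: mk2_simps algebra_simps)
    qed
  qed
qed

lemma parabolic_normal:
  assumes "parabolic f"
  shows "\<exists>P. det P = 1 \<and> (f = cj P XX \<or> f = - cj P XX)"
proof -
  obtain a b c d where f: "f = mk2 a b c d" by (rule mat2_cases)
  have det: "a*d - b*c = 1" using assms f by (simp add: parabolic_def in_SL2_def mk2_simps)
  have t: "(a + d)^2 = 4" using assms f by (simp add: parabolic_def mk2_simps)
  have ne: "f \<noteq> mat 1" "f \<noteq> - mat 1" using assms by (auto simp: parabolic_def)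
  have "(a + d - 2) * (a + d + 2) = 0" using t by (simp add: algebra_simps power2_eq_square)
  then have "a + d - 2 = 0 \<or> a + d + 2 = 0" by simp
  moreover have "a + d - 2 = 0 \<Longrightarrow> a + d = 2" by algebra
  moreover have "a + d + 2 = 0 \<Longrightarrow> a + d = -2" by algebra
  ultimately have "a + d = 2 \<or> a + d = -2" by blast
  then show ?thesis
  proof
    assume "a + d = 2"
    then show ?thesis using parabolic_core[OF det] ne f by blast
  next
    assume "a + d = -2"
    then have t2: "(-a) + (-d) = 2" by algebra
    have det2: "(-a)*(-d) - (-b)*(-c) = 1" using det by simp
    have ne2: "mk2 (-a) (-b) (-c) (-d) \<noteq> mat 1" using ne f by (auto simp: mk2_simps minus_equation_iff)
    obtain P where "det P = 1" "mk2 (-a) (-b) (-c) (-d) = cj P XX"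
      using parabolic_core[OF det2 t2 ne2] by blast
    then have "f = - cj P XX" using f by (metis mk2_neg minus_minus)
    then show ?thesis using \<open>det P = 1\<close> by blast
  qed
qed

lemma order_two_trace:
  assumes "order_two \<phi>"
  shows "det \<phi> = 1 \<and> trace \<phi> = 0"
proof -
  obtain a b c d where f: "\<phi> = mk2 a b c d" by (rule mat2_cases)
  have det: "a*d - b*c = 1" using assms f by (simp add: order_two_def in_SL2_def mk2_simps)
  have ne: "\<phi> \<noteq> mat 1" "\<phi> \<noteq> - mat 1" using assms by (auto simp: order_two_def)
  have sq: "\<phi> ** \<phi> = mat 1 \<or> \<phi> ** \<phi> = - mat 1" using assms by (auto simp: order_two_def)
  have "a + d = 0"
  proof (rule ccontr)
    assume s: "a + d \<noteq> 0"
    have e: "a*b + b*d = 0 \<and> c*a + d*c = 0" using sq f by (auto simp: mk2_simps)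
    then have "b * (a + d) = 0" "c * (a + d) = 0" by (simp_all add: algebra_simps)
    then have b0: "b = 0" and c0: "c = 0" using s by auto
    then have ad: "a*d = 1" using det by simp
    from sq show False
    proof
      assume "\<phi> ** \<phi> = mat 1"
      then have "a*a = 1" "d*d = 1" using f b0 c0 by (simp_all add: mk2_simps)
      then have "d = a" using ad by algebra
      have "(a - 1) * (a + 1) = 0" using \<open>a*a = 1\<close> by algebra
      then have "a - 1 = 0 \<or> a + 1 = 0" by simp
      moreover have "a - 1 = 0 \<Longrightarrow> a = 1" by algebra
      moreover have "a + 1 = 0 \<Longrightarrow> a = -1" by algebra
      ultimately have "a = 1 \<or> a = -1" by blast
      then show False using ne f b0 c0 \<open>d = a\<close> by (auto simp: mk2_simps)
    next
      assume "\<phi> ** \<phi> = - mat 1"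
      then have "a*a = -1" using f b0 c0 by (simp_all add: mk2_simps)
      then have "d = -a" using ad by algebra
      then show False using s by simp
    qed
  qed
  then show ?thesis using det f by (simp add: mk2_simps)
qed

lemma word_identity_cj:
  assumes ms: "ms \<noteq> []" and dP: "det P = 1" and o: "order_two \<phi>"
  shows "gamma (cj P XX) (eval_word ms (cj P XX) \<phi>) = ev (wpoly ms) (gamma (cj P XX) \<phi>)"
proof -
  define \<psi> where "\<psi> = inv2 P ** \<phi> ** P"
  have dinv: "det (inv2 P) = 1" using dP by (simp add: det_inv2)
  have cpsi: "cj P \<psi> = \<phi>" using dP
    by (simp add: \<psi>_def cj_def matrix_mul_assoc mult_inv2_right)
       (simp add: matrix_mul_assoc[symmetric] mult_inv2_right)
  have ot: "det \<phi> = 1" "trace \<phi> = 0" using order_two_trace[OF o] by auto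
  have dpsi: "det \<psi> = 1" using ot dP by (simp add: \<psi>_def det_mult2 det_inv2)
  have tpsi: "trace \<psi> = 0"
    using trace_conj[OF dinv, of \<phi>] ot by (simp add: \<psi>_def)
  have "gamma (cj P XX) (eval_word ms (cj P XX) \<phi>) = gamma (cj P XX) (cj P (eval_word ms XX \<psi>))"
    using eval_cj[OF dP, of ms XX \<psi>] cpsi by simp
  also have "\<dots> = gamma XX (eval_word ms XX \<psi>)" by (rule gamma_cj[OF dP])
  also have "\<dots> = ev (wpoly ms) (gamma XX \<psi>)" by (rule normal_identity[OF dpsi tpsi ms])
  also have "gamma XX \<psi> = gamma (cj P XX) \<phi>" using gamma_cj[OF dP, of XX \<psi>] cpsi by simp
  finally show ?thesis .
qed

lemma word_identity:
  assumes ms: "ms \<noteq> []" and p: "parabolic f" and o: "order_two \<phi>"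
  shows "gamma f (eval_word ms f \<phi>) = ev (wpoly ms) (gamma f \<phi>)"
proof -
  obtain P where dP: "det P = 1" and f: "f = cj P XX \<or> f = - cj P XX"
    using parabolic_normal[OF p] by blast
  from f show ?thesis
  proof
    assume "f = cj P XX" then show ?thesis using word_identity_cj[OF ms dP o] by simp
  next
    assume f2: "f = - cj P XX"
    have "gamma f (eval_word ms f \<phi>) = gamma (cj P XX) (eval_word ms (- cj P XX) \<phi>)"
      using f2 by (simp add: gamma_neg1)
    also have "\<dots> = gamma (cj P XX) (eval_word ms (cj P XX) \<phi>)"
      by (rule gamma_pm[OF eval_neg])
    also have "\<dots> = ev (wpoly ms) (gamma (cj P XX) \<phi>)" by (rule word_identity_cj[OF ms dP o])
    also have "gamma (cj P XX) \<phi> = gamma f \<phi>" using f2 by (simp add: gamma_neg1)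
    finally show ?thesis .
  qed
qed

lemma parabolic_XX: "parabolic XX"
  by (simp add: parabolic_def in_SL2_def mk2_simps)

lemma order_two_phic: "c \<noteq> 0 \<Longrightarrow> order_two (phic c)"
  by (simp add: order_two_def in_SL2_def phic_def mk2_simps)

lemma order_two_phi0: "order_two (mk2 \<i> 0 0 (-\<i>))"
  by (simp add: order_two_def in_SL2_def mk2_simps)

lemma word_poly_eq:
  assumes ms: "ms \<noteq> []"
  shows "word_poly ms = wpoly ms"
  unfolding word_poly_def
proof (rule the_equality)
  show "\<forall>f \<phi>. parabolic f \<longrightarrow> order_two \<phi> \<longrightarrow>
       gamma f (eval_word ms f \<phi>) = poly (map_poly of_int (wpoly ms)) (gamma f \<phi>)"
    using word_identity[OF ms] by (simp add: ev_def)
next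
  fix p assume H: "\<forall>f \<phi>. parabolic f \<longrightarrow> order_two \<phi> \<longrightarrow>
       gamma f (eval_word ms f \<phi>) = poly (map_poly of_int p) (gamma f \<phi>)"
  have "poly (map_poly of_int p) y = poly (map_poly of_int (wpoly ms)) y" for y :: complex
  proof -
    obtain \<phi> where o: "order_two \<phi>" and g: "gamma XX \<phi> = y"
    proof (cases "y = 0")
      case True
      have "gamma XX (mk2 \<i> 0 0 (-\<i>)) = 0" by (subst gamma_X) (simp_all add: mk2_simps)
      then show ?thesis using that order_two_phi0 True by blast
    next
      case False
      define c where "c = csqrt y"
      have c2: "c^2 = y" by (simp add: c_def)
      have c0: "c \<noteq> 0" using False c2 by auto
      have "gamma XX (phic c) = y" using c2 c0 by (subst gamma_X) (simp_all add: phic_def mk2_simps)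
      then show ?thesis using that order_two_phic[OF c0] by blast
    qed
    then show ?thesis using H[rule_format, OF parabolic_XX o] word_identity[OF ms parabolic_XX o]
      by (simp add: ev_def)
  qed
  then have "map_poly (of_int::int\<Rightarrow>complex) p = map_poly of_int (wpoly ms)"
    using poly_eq_poly_eq_iff by blast
  then show "p = wpoly ms" by (rule mpoi_inj)
qed


lemma conjX_formula:
  assumes "det M = 1"
  shows "M ** XX ** inv2 M = mk2 (1 - M$1$1 * M$2$1) (M$1$1 * M$1$1) (- (M$2$1 * M$2$1)) (1 + M$1$1 * M$2$1)"
proof (cases M rule: mat2_cases)
  case (1 a b c d)
  then have det: "a*d - b*c = 1" using assms by (simp add: mk2_simps)
  have eq: "a * d - (a + b) * c = 1 - a * c" "(a + b) * a - a * b = a * a"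
    "c * d - (c + d) * c = - (c * c)" "(c + d) * a - c * b = 1 + a * c" using det by algebra+
  then show ?thesis using 1 by (simp add: mk2_simps)
qed

lemma shimizu:
  assumes disc: "discrete_group G" and XG: "XX \<in> G"
    and mult: "\<And>g h. g \<in> G \<Longrightarrow> h \<in> G \<Longrightarrow> g ** h \<in> G"
    and inv: "\<And>g. g \<in> G \<Longrightarrow> inv2 g \<in> G"
    and hG: "h \<in> G" and dh: "det h = 1"
    and c0: "h$2$1 \<noteq> 0" and c1: "norm (h$2$1) < 1"
  shows False
proof -
  define hs where "hs = rec_nat h (\<lambda>_ M. M ** XX ** inv2 M)"
  have hs0: "hs 0 = h" and hsS: "\<And>n. hs (Suc n) = hs n ** XX ** inv2 (hs n)"
    by (simp_all add: hs_def)
  have hsG: "hs n \<in> G \<and> det (hs n) = 1" for n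
  proof (induction n)
    case 0 then show ?case using hG dh hs0 by simp
  next
    case (Suc n)
    then show ?case using mult inv XG
      by (simp add: hsS det_mult2 det_inv2 mk2_simps)
  qed
  define a where "a n = hs n $1$1" for n
  define c where "c n = hs n $2$1" for n
  have hsS': "hs (Suc n) = mk2 (1 - a n * c n) (a n * a n) (- (c n * c n)) (1 + a n * c n)" for n
    using conjX_formula[of "hs n"] hsG[of n] by (simp add: hsS a_def c_def)
  have aS: "a (Suc n) = 1 - a n * c n" for n using hsS' by (simp add: a_def)
  have cS: "c (Suc n) = - (c n * c n)" for n using hsS'[of n] by (simp add: c_def[of "Suc n"])
  define t where "t = norm (c 0)"
  have t0: "0 < t" and t1: "t < 1" using c0 c1 hs0 by (simp_all add: t_def c_def)
  have cn: "norm (c n) = t ^ (2^n)" for n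
  proof (induction n)
    case 0 then show ?case by (simp add: t_def)
  next
    case (Suc n)
    have "norm (c (Suc n)) = norm (c n) ^ 2" by (simp add: cS norm_mult power2_eq_square)
    also have "\<dots> = (t^(2^n))^2" using Suc.IH by simp
    also have "\<dots> = t^(2^Suc n)" by (simp add: power_mult[symmetric] mult.commute)
    finally show ?case .
  qed
  have cle: "norm (c n) \<le> t ^ Suc n" for n
  proof -
    have "Suc n \<le> 2^n" by (induction n) auto
    then have "t ^ (2^n) \<le> t ^ Suc n" using t0 t1 by (intro power_decreasing) auto
    then show ?thesis using cn by simp
  qed
  have cle1: "norm (c n) \<le> t" for n
  proof -
    have "t ^ Suc n \<le> t ^ 1" using t0 t1 by (intro power_decreasing) auto
    then show ?thesis using cle[of n] by simp
  qed
  have cne: "c n \<noteq> 0" for n using cn[of n] t0 by auto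
  define K where "K = max (norm (a 0)) (1 / (1 - t))"
  have "1 / (1 - t) \<le> K" by (simp add: K_def)
  then have K1: "K * (1 - t) \<ge> 1" using t1 by (simp add: pos_divide_le_eq)
  have K0: "K \<ge> 0" by (simp add: K_def le_max_iff_disj)
  have aK: "norm (a n) \<le> K" for n
  proof (induction n)
    case 0 then show ?case by (simp add: K_def)
  next
    case (Suc n)
    have "norm (a (Suc n)) \<le> 1 + norm (a n) * norm (c n)"
      unfolding aS by (metis norm_mult norm_one norm_triangle_ineq4)
    also have "\<dots> \<le> 1 + K * t" using Suc cle1[of n] K0 by (intro add_left_mono mult_mono) auto
    also have "\<dots> \<le> K" using K1 by (simp add: algebra_simps)
    finally show ?case .
  qed
  define x where "x n = a n * c n" for n
  have xle: "norm (x n) \<le> K * t ^ Suc n" for n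
    unfolding x_def norm_mult using aK[of n] cle[of n] K0 by (intro mult_mono) auto
  have xleK: "norm (x n) \<le> K" for n
  proof -
    have "t ^ Suc n \<le> 1" using t0 t1 by (intro power_le_one) auto
    then have "K * t ^ Suc n \<le> K" using K0 by (rule mult_left_le)
    then show ?thesis using xle[of n] by linarith
  qed
  define C where "C = 2 * K + K * (K + 2) + 1"
  have dist_bound: "dist (hs (Suc (Suc n))) XX \<le> C * t ^ Suc n" for n
  proof -
    have h2: "hs (Suc (Suc n)) = mk2 (1 - x (Suc n)) ((1 - x n) * (1 - x n)) (- (c (Suc n) * c (Suc n))) (1 + x (Suc n))"
      using hsS'[of "Suc n"] aS[of n] by (simp add: x_def)
    have "dist (hs (Suc (Suc n))) XX \<le> norm (x (Suc n)) + norm (x n * x n - 2 * x n) + norm (c (Suc n) * c (Suc n)) + norm (x (Suc n))"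
      using mk2_dist[of "1 - x (Suc n)" "(1 - x n) * (1 - x n)" "- (c (Suc n) * c (Suc n))" "1 + x (Suc n)" 1 1 0 1] h2
      by (simp add: algebra_simps)
    also have "\<dots> \<le> K * t ^ Suc n + (K + 2) * (K * t ^ Suc n) + t ^ Suc n + K * t ^ Suc n"
    proof -
      have "norm (x (Suc n)) \<le> K * t ^ Suc n"
      proof -
        have "t ^ Suc (Suc n) \<le> t ^ Suc n" using t0 t1 by (intro power_decreasing) auto
        then have "K * t ^ Suc (Suc n) \<le> K * t ^ Suc n" using K0 by (rule mult_left_mono)
        then show ?thesis using xle[of "Suc n"] by linarith
      qed
      moreover have "norm (x n * x n - 2 * x n) \<le> (K + 2) * (K * t ^ Suc n)"
      proof -
        have "norm (x n * x n - 2 * x n) = norm (x n - 2) * norm (x n)"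
          by (metis norm_mult mult.commute right_diff_distrib)
        also have "\<dots> \<le> (K + 2) * (K * t ^ Suc n)"
          using xleK[of n] xle[of n] K0 by (intro mult_mono) (auto intro: order_trans[OF norm_triangle_ineq4])
        finally show ?thesis .
      qed
      moreover have "norm (c (Suc n) * c (Suc n)) \<le> t ^ Suc n"
      proof -
        have "norm (c (Suc n) * c (Suc n)) = norm (c (Suc (Suc n)))" by (simp add: cS)
        also have "\<dots> \<le> t ^ Suc (Suc (Suc n))" by (rule cle)
        also have "\<dots> \<le> t ^ Suc n" using t0 t1 by (intro power_decreasing) auto
        finally show ?thesis .
      qed
      ultimately show ?thesis by linarith
    qed
    also have "\<dots> = C * t ^ Suc n" by (simp add: C_def algebra_simps)
    finally show ?thesis .
  qed
  obtain e where e0: "e > 0" and e: "\<forall>g\<in>G. dist g XX < e \<longrightarrow> g = XX"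
    using disc XG unfolding discrete_group_def by blast
  have C0: "C > 0" using K0 by (simp add: C_def add_nonneg_pos)
  obtain n where n: "t ^ n < e / C" using real_arch_pow_inv[of "e / C" t] e0 C0 t1 by auto
  have "t ^ Suc n \<le> t ^ n" using t0 t1 by (intro power_decreasing) auto
  then have "C * t ^ Suc n \<le> C * t ^ n" using C0 by (intro mult_left_mono) auto
  also have "C * t ^ n < e" using n C0 by (simp add: field_simps)
  finally have "C * t ^ Suc n < e" .
  then have "dist (hs (Suc (Suc n))) XX < e" using dist_bound[of n] by linarith
  then have "hs (Suc (Suc n)) = XX" using e hsG by blast
  then have "c (Suc (Suc n)) = 0" by (simp add: c_def)
  then show False using cne by blast
qed


lemma cj_comp: "cj (A ** B) h = cj A (cj B h)"
  by (simp add: cj_def inv2_mult matrix_mul_assoc)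

lemma cj_id: "cj (mat 1) h = h"
  by (simp add: cj_def)

definition pres :: "complex \<Rightarrow> mat2 \<Rightarrow> bool" where
  "pres u E \<longleftrightarrow> (\<forall>h\<in>Gamma u. cj E h \<in> Gamma u)"

lemma pres_mult: "pres u A \<Longrightarrow> pres u B \<Longrightarrow> pres u (A ** B)"
  by (simp add: pres_def cj_comp)

lemma pres_one: "pres u (mat 1)"
  by (simp add: pres_def cj_id)

lemma pres_mem: "A \<in> Gamma u \<Longrightarrow> pres u A"
  unfolding pres_def cj_def Gamma_def
  by (blast intro: gen_group.gen_mult gen_group.gen_inv)

lemma XX_mem: "XX \<in> Gamma u"
  by (simp add: Gamma_def gen_group.gen_base)

lemma pres_pow: "pres u A \<Longrightarrow> pres u (((\<lambda>Y. Y ** A) ^^ n) (mat 1))"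
  by (induction n) (simp_all add: pres_one pres_mult)

lemma pres_mpowX: "pres u (mpow XX m)"
proof -
  have "pres u XX" "pres u (inv2 XX)"
    using XX_mem by (auto intro: pres_mem simp: Gamma_def gen_group.gen_inv)
  then show ?thesis by (simp add: mpow_def pres_pow)
qed

lemma pres_phic:
  assumes c0: "c \<noteq> 0" and u: "c^2 = u"
  shows "pres u (phic c)"
proof -
  have u0: "u \<noteq> 0" using c0 u by auto
  show ?thesis
  unfolding pres_def
proof
  fix h assume "h \<in> Gamma u"
  then show "cj (phic c) h \<in> Gamma u" unfolding Gamma_def
  proof (induction rule: gen_group.induct)
    case gen_one
    then show ?case using cj_one[OF det_phic[OF c0]] by (simp add: gen_group.gen_one)
  next
    case (gen_base s)
    have Y: "mk2 1 0 u 1 \<in> gen_group {XX, mk2 1 0 u 1, - mat 1}" by (simp add: gen_group.gen_base)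
    have X: "XX \<in> gen_group {XX, mk2 1 0 u 1, - mat 1}" by (simp add: gen_group.gen_base)
    have M: "- mat 1 \<in> gen_group {XX, mk2 1 0 u 1, - mat 1}" by (simp add: gen_group.gen_base)
    have e1: "cj (phic c) XX = inv2 (mk2 1 0 u 1)" using c0 u
      by (simp add: cj_def phic_def mk2_simps power2_eq_square)
    have e2: "cj (phic c) (mk2 1 0 u 1) = inv2 XX" using c0 u u0
      by (simp add: cj_def phic_def mk2_simps power2_eq_square)
    have e3: "cj (phic c) (- mat 1) = - mat 1" using c0
      by (simp add: cj_def phic_def mk2_simps)
    from gen_base show ?case using e1 e2 e3 X Y M by (auto intro: gen_group.gen_inv)
  next
    case (gen_mult g h)
    then show ?case using cj_mult[OF det_phic[OF c0], of g h] by (metis gen_group.gen_mult)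
  next
    case (gen_inv g)
    then show ?case using cj_inv2[of "phic c" g] by (metis gen_group.gen_inv)
  qed
qed
qed

lemma pres_eval:
  assumes "c \<noteq> 0" "c^2 = u"
  shows "pres u (eval_word ms XX (phic c))"
  by (induction ms XX "phic c" rule: eval_word.induct)
     (simp_all add: pres_one pres_mpowX pres_mult pres_phic[OF assms])

lemma value_dichotomy:
  assumes disc: "discrete_group (Gamma u)" and ms: "ms \<noteq> []"
  shows "ev (wpoly ms) u = 0 \<or> 1 \<le> norm (ev (wpoly ms) u)"
proof (cases "u = 0")
  case True then show ?thesis by (simp add: wpoly_0)
next
  case False
  define c where "c = csqrt u"
  have c2: "c^2 = u" by (simp add: c_def)
  have c0: "c \<noteq> 0" using False c2 by auto
  define g where "g = eval_word ms XX (phic c)"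
  have val: "ev (wpoly ms) u = (g$2$1)^2" using LL_phic[OF c0 ms] c2 by (simp add: g_def)
  have dg: "det g = 1" unfolding g_def by (rule det_eval) (simp_all add: mk2_simps det_phic c0)
  show ?thesis
  proof (rule ccontr)
    assume H: "\<not> ?thesis"
    then have l0: "g$2$1 \<noteq> 0" and l1: "norm (g$2$1) < 1" using val
      by (auto simp: norm_power) (metis less_one not_le one_le_power power_0 norm_ge_zero less_le_not_le)
    define h where "h = cj g XX"
    have hG: "h \<in> Gamma u" using pres_eval[OF c0 c2, of ms] XX_mem by (simp add: pres_def h_def g_def)
    have dh: "det h = 1" using dg by (simp add: h_def cj_def det_mult2 det_inv2 mk2_simps)
    have h21: "h$2$1 = - (g$2$1 * g$2$1)" using conjX_formula[OF dg] by (simp add: h_def cj_def)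
    show False
    proof (rule shimizu[OF disc XX_mem _ _ hG dh])
      show "\<And>g h. g \<in> Gamma u \<Longrightarrow> h \<in> Gamma u \<Longrightarrow> g ** h \<in> Gamma u"
        by (simp add: Gamma_def gen_group.gen_mult)
      show "\<And>g. g \<in> Gamma u \<Longrightarrow> inv2 g \<in> Gamma u"
        by (simp add: Gamma_def gen_group.gen_inv)
      show "h$2$1 \<noteq> 0" using h21 l0 by simp
      have "norm (h$2$1) = norm (g$2$1) * norm (g$2$1)" using h21 by (simp add: norm_mult)
      also have "\<dots> \<le> norm (g$2$1) * 1" using l1 by (intro mult_left_mono) auto
      also have "\<dots> < 1" using l1 by simp
      finally show "norm (h$2$1) < 1" .
    qed
  qed
qed


lemma dichot_connected:
  assumes conn: "connected U" and cont: "continuous_on U p"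
    and d: "\<And>u. u \<in> U \<Longrightarrow> p u = 0 \<or> 1 \<le> norm (p u)"
  shows "(\<forall>u\<in>U. p u = 0) \<or> (\<forall>u\<in>U. 1 \<le> norm (p u))"
proof -
  have eq: "U \<inter> p -` {0} = U \<inter> p -` ball 0 1"
  proof (intro set_eqI iffI)
    fix x assume "x \<in> U \<inter> p -` {0}" then show "x \<in> U \<inter> p -` ball 0 1" by simp
  next
    fix x assume x: "x \<in> U \<inter> p -` ball 0 1"
    then have "norm (p x) < 1" by (simp add: dist_norm)
    then show "x \<in> U \<inter> p -` {0}" using d[of x] x by auto
  qed
  have o: "openin (top_of_set U) (U \<inter> p -` {0})"
    unfolding eq by (rule continuous_openin_preimage_gen[OF cont]) simp
  have c: "closedin (top_of_set U) (U \<inter> p -` {0})"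
    by (rule continuous_closedin_preimage[OF cont]) simp
  have "U \<inter> p -` {0} = {} \<or> U \<inter> p -` {0} = U"
    using conn o c unfolding connected_clopen by blast
  then show ?thesis using d by blast
qed

lemma normal_omit:
  assumes U: "open U" "connected U"
    and hol: "\<And>p. p \<in> F \<Longrightarrow> p holomorphic_on U"
    and dich: "\<And>p u. p \<in> F \<Longrightarrow> u \<in> U \<Longrightarrow> p u = 0 \<or> 1 \<le> norm (p u)"
  shows "normal_family_on F U"
  unfolding normal_family_on_def
proof (intro allI impI)
  fix f :: "nat \<Rightarrow> complex \<Rightarrow> complex"
  assume fF: "\<forall>n. f n \<in> F"
  have holf: "f n holomorphic_on U" for n using hol fF by blast
  have dn: "(\<forall>u\<in>U. f n u = 0) \<or> (\<forall>u\<in>U. 1 \<le> norm (f n u))" for n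
    using dichot_connected[OF U(2) holomorphic_on_imp_continuous_on[OF holf[of n]]] dich fF by blast
  let ?Z = "{n. \<forall>u\<in>U. f n u = 0}"
  let ?S = "{n. \<forall>u\<in>U. 1 \<le> norm (f n u)}"
  show "\<exists>r. strict_mono r \<and>
           ((\<exists>g. \<forall>K. compact K \<and> K \<subseteq> U \<longrightarrow> uniform_limit K (\<lambda>n. f (r n)) g sequentially) \<or>
            (\<forall>K. compact K \<and> K \<subseteq> U \<longrightarrow>
               (\<forall>B. eventually (\<lambda>n. \<forall>x\<in>K. B \<le> norm (f (r n) x)) sequentially)))"
  proof (cases "infinite ?Z")
    case True
    then obtain r :: "nat \<Rightarrow> nat" where r: "strict_mono r" "\<forall>n. r n \<in> ?Z"
      using infinite_enumerate by blast
    have "uniform_limit K (\<lambda>n. f (r n)) (\<lambda>_. 0) sequentially" if "K \<subseteq> U" for K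
    proof (rule uniform_limitI)
      fix e :: real assume e: "e > 0"
      show "\<forall>\<^sub>F n in sequentially. \<forall>x\<in>K. dist (f (r n) x) 0 < e"
      proof -
        have z: "\<And>n x. x \<in> K \<Longrightarrow> f (r n) x = 0" using r(2) that by blast
        show ?thesis by (rule always_eventually) (simp add: z e)
      qed
    qed
    then show ?thesis using r by blast
  next
    case False
    have "UNIV = ?Z \<union> ?S" using dn by blast
    then have "infinite ?S"
    proof -
      assume U: "UNIV = ?Z \<union> ?S"
      show "infinite ?S"
      proof
        assume "finite ?S"
        then have "finite (?Z \<union> ?S)" using False by simp
        then show False using U infinite_UNIV_nat by simp
      qed
    qed
    then obtain r0 :: "nat \<Rightarrow> nat" where r0: "strict_mono r0" "\<forall>n. r0 n \<in> ?S"
      using infinite_enumerate by blast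
    define hh where "hh n z = inverse (f (r0 n) z)" for n z
    have fnz: "z \<in> U \<Longrightarrow> f (r0 n) z \<noteq> 0" for n z
    proof -
      assume z: "z \<in> U"
      have "1 \<le> norm (f (r0 n) z)" using r0(2) z by blast
      then show ?thesis by auto
    qed
    have hhol: "hh n holomorphic_on U" for n
      unfolding hh_def by (rule holomorphic_on_inverse[OF holf]) (use fnz in auto)
    have hbound: "z \<in> U \<Longrightarrow> norm (hh n z) \<le> 1" for n z
      using r0(2) unfolding hh_def by (simp add: norm_inverse inverse_le_1_iff)
    have hnz: "z \<in> U \<Longrightarrow> hh n z \<noteq> 0" for n z
      using fnz by (simp add: hh_def)
    obtain g r1 where ghol: "g holomorphic_on U" and r1: "strict_mono (r1 :: nat \<Rightarrow> nat)"
      and ul: "\<And>K. \<lbrakk>compact K; K \<subseteq> U\<rbrakk> \<Longrightarrow> uniform_limit K (hh \<circ> r1) g sequentially"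
    proof (rule Montel[OF U(1), of "range hh" hh])
      show "\<And>h. h \<in> range hh \<Longrightarrow> h holomorphic_on U" using hhol by blast
      show "\<And>K. compact K \<Longrightarrow> K \<subseteq> U \<Longrightarrow> \<exists>B. \<forall>h\<in>range hh. \<forall>z\<in>K. cmod (h z) \<le> B"
        using hbound by blast
    qed auto
    define r where "r = r0 \<circ> r1"
    have rmono: "strict_mono r" unfolding r_def using r0(1) r1 by (rule strict_mono_o)
    have fr: "f (r n) z = inverse ((hh \<circ> r1) n z)" for n z by (simp add: r_def hh_def)
    show ?thesis
    proof (cases "\<exists>z0\<in>U. g z0 = 0")
      case True
      then obtain z0 where z0: "z0 \<in> U" "g z0 = 0" by blast
      have "g constant_on U"
      proof (rule ccontr)
        assume nc: "\<not> g constant_on U"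
        have "g z0 \<noteq> 0"
          by (rule Hurwitz_no_zeros[OF U _ ghol ul nc _ z0(1)]) (use hhol hnz in auto)
        then show False using z0 by simp
      qed
      then have g0: "\<forall>z\<in>U. g z = 0" using z0 unfolding constant_on_def by metis
      have "\<forall>\<^sub>F n in sequentially. \<forall>x\<in>K. B \<le> norm (f (r n) x)" if K: "compact K" "K \<subseteq> U" for K B
      proof -
        define M where "M = max B 1"
        have M0: "M > 0" by (simp add: M_def)
        have "\<forall>\<^sub>F n in sequentially. \<forall>x\<in>K. dist ((hh \<circ> r1) n x) (g x) < inverse M"
          using uniform_limitD[OF ul[OF K]] M0 by simp
        then show ?thesis
        proof (rule eventually_mono)
          fix n assume H: "\<forall>x\<in>K. dist ((hh \<circ> r1) n x) (g x) < inverse M"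
          show "\<forall>x\<in>K. B \<le> norm (f (r n) x)"
          proof
            fix x assume x: "x \<in> K"
            have gx: "g x = 0" using g0 x K(2) by blast
            have a: "norm ((hh \<circ> r1) n x) < inverse M" using H[rule_format, OF x] gx by (simp add: dist_norm)
            have nz: "(hh \<circ> r1) n x \<noteq> 0" using hnz x K(2) by auto
            have "M < inverse (norm ((hh \<circ> r1) n x))"
              using less_imp_inverse_less[OF a] nz M0 by simp
            then show "B \<le> norm (f (r n) x)" by (simp add: fr norm_inverse M_def)
          qed
        qed
      qed
      then show ?thesis using rmono by blast
    next
      case False
      then have gnz: "\<forall>z\<in>U. g z \<noteq> 0" by blast
      have "uniform_limit K (\<lambda>n. f (r n)) (\<lambda>z. inverse (g z)) sequentially"
        if K: "compact K" "K \<subseteq> U" for K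
      proof (cases "K = {}")
        case True then show ?thesis by (simp add: uniform_limitI)
      next
        case False
        have cg: "continuous_on K (\<lambda>z. norm (g z))"
          using holomorphic_on_imp_continuous_on[OF ghol] K(2)
          by (intro continuous_on_norm) (rule continuous_on_subset)
        obtain x0 where x0: "x0 \<in> K" "\<forall>y\<in>K. norm (g x0) \<le> norm (g y)"
          using continuous_attains_inf[OF K(1) False cg] by blast
        define \<delta> where "\<delta> = norm (g x0)"
        have d0: "\<delta> > 0" using gnz x0 K(2) by (auto simp: \<delta>_def)
        show ?thesis
        proof (rule uniform_limitI)
          fix e :: real assume e: "e > 0"
          define \<epsilon> where "\<epsilon> = min (\<delta>/2) (e * \<delta> * \<delta> / 2)"
          have eps: "\<epsilon> > 0" using d0 e by (simp add: \<epsilon>_def)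
          have "\<forall>\<^sub>F n in sequentially. \<forall>x\<in>K. dist ((hh \<circ> r1) n x) (g x) < \<epsilon>"
            using uniform_limitD[OF ul[OF K] eps] .
          then show "\<forall>\<^sub>F n in sequentially. \<forall>x\<in>K. dist (f (r n) x) (inverse (g x)) < e"
          proof (rule eventually_mono)
            fix n assume H: "\<forall>x\<in>K. dist ((hh \<circ> r1) n x) (g x) < \<epsilon>"
            show "\<forall>x\<in>K. dist (f (r n) x) (inverse (g x)) < e"
            proof
              fix x assume x: "x \<in> K"
              define a where "a = (hh \<circ> r1) n x"
              define b where "b = g x"
              have ab: "norm (a - b) < \<epsilon>" using H x by (simp add: a_def b_def dist_norm)
              have bd: "\<delta> \<le> norm b" using x0 x by (simp add: b_def \<delta>_def)
              have ad: "\<delta>/2 \<le> norm a"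
              proof -
                have "norm b \<le> norm a + norm (a - b)" using norm_triangle_sub[of b a] norm_minus_commute[of b a] by simp
                then show ?thesis using ab bd by (simp add: \<epsilon>_def)
              qed
              have a0: "a \<noteq> 0" using ad d0 by auto
              have b0: "b \<noteq> 0" using bd d0 by auto
              have "dist (f (r n) x) (inverse (g x)) = norm (inverse a - inverse b)"
                by (simp add: fr a_def b_def dist_norm)
              also have "\<dots> = norm (a - b) / (norm a * norm b)"
                using a0 b0 by (simp add: inverse_diff_inverse norm_mult norm_inverse divide_inverse mult_ac)
              also have "\<dots> \<le> norm (a - b) / ((\<delta>/2) * \<delta>)"
              proof (rule divide_left_mono)
                show "\<delta> / 2 * \<delta> \<le> norm a * norm b" using ad bd d0 by (intro mult_mono) auto
                show "0 \<le> norm (a - b)" by simp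
                have "0 < norm a" "0 < norm b" using a0 b0 by auto
                then show "0 < norm a * norm b * (\<delta> / 2 * \<delta>)" using d0 by simp
              qed
              also have "\<dots> < e"
              proof -
                have "norm (a - b) < e * \<delta> * \<delta> / 2" using ab by (simp add: \<epsilon>_def)
                then show ?thesis using d0 by (simp add: field_simps)
              qed
              finally show "dist (f (r n) x) (inverse (g x)) < e" .
            qed
          qed
        qed
      qed
      then show ?thesis using rmono by blast
    qed
  qed
qed


theorem corollary4:
  shows "interior riley_slice \<subseteq> fatou_set word_semigroup"
proof
  fix z assume "z \<in> interior riley_slice"
  then obtain \<epsilon> where e: "\<epsilon> > 0" "ball z \<epsilon> \<subseteq> riley_slice" by (auto simp: mem_interior)
  have "normal_family_on word_semigroup (ball z \<epsilon>)"
  proof (rule normal_omit)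
    show "open (ball z \<epsilon>)" by simp
    show "connected (ball z \<epsilon>)" by simp
    show "p holomorphic_on ball z \<epsilon>" if "p \<in> word_semigroup" for p
      using that unfolding word_semigroup_def by (auto intro!: holomorphic_intros)
    show "p u = 0 \<or> 1 \<le> norm (p u)" if p: "p \<in> word_semigroup" and u: "u \<in> ball z \<epsilon>" for p u
    proof -
      obtain w where w: "good_word w" "p = (\<lambda>x. poly (map_poly of_int (word_poly w)) x)"
        using p unfolding word_semigroup_def by blast
      have wne: "w \<noteq> []" using w(1) by (auto simp: good_word_def)
      have disc: "discrete_group (Gamma u)" using e u by (auto simp: riley_slice_def)
      have "p u = ev (wpoly w) u" using w(2) word_poly_eq[OF wne] by (simp add: ev_def)
      then show ?thesis using value_dichotomy[OF disc wne] by simp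
    qed
  qed
  then show "z \<in> fatou_set word_semigroup"
    unfolding fatou_set_def using e(1) by (intro CollectI exI[of _ "ball z \<epsilon>"]) simp
qed


end
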